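(* Let $G=(V,E,w)$ be a similarity graph. If $G$ is a ground-truth input, then $G$ has perfect HC-structure. The converse does not hold: there exists a graph with perfect HC-structure that is not a ground-truth input.
   Context: Weights are symmetric and nonnegative, with $w(x,y)=0$ if $(x,y)\notin E$. $G$ is a ground-truth input (similarity graph generated from an ultrametric) if there exist an ultrametric $d$ on $V$ (a metric with $d(x,y)\le\max\{d(x,z),d(y,z)\}$ for all $x,y,z$) and a non-increasing function $f:\mathbb{R}_+\to\mathbb{R}_+$ such that $w(x,y)=f(d(x,y))$ for all $x\ne y\in V$. An HC-tree for $V=\{v_1,\dots,v_n\}$ is a rooted tree with leaf set $V$. For distinct $i,j,k$: $\{i,j|k\}$ holds in $T$ if $\mathrm{LCA}(v_i,v_j)$ is a proper descendant of $\mathrm{LCA}(v_i,v_j,v_k)$; $\{i|j|k\}$ holds if $\mathrm{LCA}(v_i,v_j)=\mathrm{LCA}(v_j,v_k)=\mathrm{LCA}(v_i,v_j,v_k)$. Triplet cost $c_T(i,j,k)$: $w_{ik}+w_{jk}$ if $\{i,j|k\}$; $w_{ij}+w_{jk}$ if $\{i,k|j\}$; $w_{ij}+w_{ik}$ if $\{j,k|i\}$; $w_{ij}+w_{jk}+w_{ik}$ if $\{i|j|k\}$. $\mathrm{TC}_G(T)=\sum c_T(i,j,k)$ and $\mathrm{BC}(G)=\sum\min\{w_{ij}+w_{ik},w_{ij}+w_{jk},w_{ik}+w_{jk}\}$ over unordered triples of distinct indices; $\rho_G(T)=\mathrm{TC}_G(T)/\mathrm{BC}(G)$ (with $0/0=1$,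 $x/0=+\infty$ for $x>0$), $\rho^*_G=\min_T\rho_G(T)$. $G$ has perfect HC-structure if $\rho^*_G=1$, equivalently if some HC-tree $T$ has $\mathrm{TC}_G(T)=\mathrm{BC}(G)$. *)

theory Defs
  imports Complex_Main "HOL-Library.Extended_Real"
begin

text \<open>A similarity graph on a finite nonempty vertex set V with symmetric nonnegative
  weights w. The edge set E is implicit: it is the support of w (w x y = 0 off E).\<close>

definition similarity_graph :: "'a set \<Rightarrow> ('a \<Rightarrow> 'a \<Rightarrow> real) \<Rightarrow> bool" where
  "similarity_graph V w \<longleftrightarrow> finite V \<and> V \<noteq> {} \<and>
     (\<forall>x\<in>V. \<forall>y\<in>V. w x y = w y x \<and> 0 \<le> w x y)"

definition ultrametric_on :: "'a set \<Rightarrow> ('a \<Rightarrow> 'a \<Rightarrow> real) \<Rightarrow> bool" where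
  "ultrametric_on V d \<longleftrightarrow>
     (\<forall>x\<in>V. \<forall>y\<in>V. 0 \<le> d x y \<and> (d x y = 0 \<longleftrightarrow> x = y) \<and> d x y = d y x) \<and>
     (\<forall>x\<in>V. \<forall>y\<in>V. \<forall>z\<in>V. d x y \<le> d x z + d z y) \<and>
     (\<forall>x\<in>V. \<forall>y\<in>V. \<forall>z\<in>V. d x y \<le> max (d x z) (d y z))"

definition ground_truth :: "'a set \<Rightarrow> ('a \<Rightarrow> 'a \<Rightarrow> real) \<Rightarrow> bool" where
  "ground_truth V w \<longleftrightarrow>
     (\<exists>d f. ultrametric_on V d \<and>
        (\<forall>t\<ge>0. f t \<ge> (0::real)) \<and>
        (\<forall>s t. 0 \<le> s \<longrightarrow> s \<le> t \<longrightarrow> f t \<le> f s) \<and>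
        (\<forall>x\<in>V. \<forall>y\<in>V. x \<noteq> y \<longrightarrow> w x y = f (d x y)))"

datatype 'a hctree = Leaf 'a | Node "'a hctree list"

fun leaves :: "'a hctree \<Rightarrow> 'a list" where
  "leaves (Leaf x) = [x]"
| "leaves (Node ts) = concat (map leaves ts)"

fun wf_tree :: "'a hctree \<Rightarrow> bool" where
  "wf_tree (Leaf x) = True"
| "wf_tree (Node ts) = (ts \<noteq> [] \<and> (\<forall>t\<in>set ts. wf_tree t))"

text \<open>All nodes of the tree, each identified with the subtree rooted at it.\<close>
fun subtrees :: "'a hctree \<Rightarrow> 'a hctree set" where
  "subtrees (Leaf x) = {Leaf x}"
| "subtrees (Node ts) = insert (Node ts) (\<Union>t\<in>set ts. subtrees t)"

text \<open>A rooted tree whose leaf set is exactly V (each vertex labels exactly one leaf;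
  every internal node has at least one child, so all tree leaves are vertex leaves).\<close>
definition hc_tree :: "'a set \<Rightarrow> 'a hctree \<Rightarrow> bool" where
  "hc_tree V T \<longleftrightarrow> wf_tree T \<and> distinct (leaves T) \<and> set (leaves T) = V"

text \<open>{i,j|k}: LCA(i,j) is a proper descendant of LCA(i,j,k), i.e. some node of T has
  both i and j but not k below it.\<close>
definition split3 :: "'a hctree \<Rightarrow> 'a \<Rightarrow> 'a \<Rightarrow> 'a \<Rightarrow> bool" where
  "split3 T i j k \<longleftrightarrow>
     (\<exists>s\<in>subtrees T. i \<in> set (leaves s) \<and> j \<in> set (leaves s) \<and> k \<notin> set (leaves s))"

definition triplet_cost :: "('a \<Rightarrow> 'a \<Rightarrow> real) \<Rightarrow> 'a hctree \<Rightarrow> 'a \<Rightarrow> 'a \<Rightarrow> 'a \<Rightarrow> real" where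
  "triplet_cost w T i j k =
     (if split3 T i j k then w i k + w j k
      else if split3 T i k j then w i j + w j k
      else if split3 T j k i then w i j + w i k
      else w i j + w j k + w i k)"

text \<open>Sums over unordered triples of distinct vertices, written as sums over ordered
  triples divided by 6 (both summands are symmetric in i,j,k).\<close>
definition TC :: "'a set \<Rightarrow> ('a \<Rightarrow> 'a \<Rightarrow> real) \<Rightarrow> 'a hctree \<Rightarrow> real" where
  "TC V w T = (\<Sum>i\<in>V. \<Sum>j\<in>V. \<Sum>k\<in>V.
      if i \<noteq> j \<and> i \<noteq> k \<and> j \<noteq> k then triplet_cost w T i j k else 0) / 6"

definition BC :: "'a set \<Rightarrow> ('a \<Rightarrow> 'a \<Rightarrow> real) \<Rightarrow> real" where
  "BC V w = (\<Sum>i\<in>V. \<Sum>j\<in>V. \<Sum>k\<in>V.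
      if i \<noteq> j \<and> i \<noteq> k \<and> j \<noteq> k
      then min (w i j + w i k) (min (w i j + w j k) (w i k + w j k)) else 0) / 6"

definition rho :: "'a set \<Rightarrow> ('a \<Rightarrow> 'a \<Rightarrow> real) \<Rightarrow> 'a hctree \<Rightarrow> ereal" where
  "rho V w T =
     (if BC V w = 0 then (if TC V w T = 0 then 1 else \<infinity>)
      else ereal (TC V w T / BC V w))"

definition rho_star :: "'a set \<Rightarrow> ('a \<Rightarrow> 'a \<Rightarrow> real) \<Rightarrow> ereal" where
  "rho_star V w = (INF T\<in>{T. hc_tree V T}. rho V w T)"

definition perfect_HC_structure :: "'a set \<Rightarrow> ('a \<Rightarrow> 'a \<Rightarrow> real) \<Rightarrow> bool" where
  "perfect_HC_structure V w \<longleftrightarrow> rho_star V w = 1"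

end

theory Submission
  imports Defs
begin

fun bin :: "'a hctree \<Rightarrow> bool" where
  "bin (Leaf x) = True"
| "bin (Node [l, r]) = (bin l \<and> bin r)"
| "bin (Node _) = False"

lemma bin_wf: "bin T \<Longrightarrow> wf_tree T"
  by (induction T rule: bin.induct) auto

lemma self_subtree: "t \<in> subtrees t"
  by (cases t) auto

lemma leaves_subtree: "s \<in> subtrees t \<Longrightarrow> set (leaves s) \<subseteq> set (leaves t)"
  by (induction t arbitrary: s) fastforce+

lemma subtree_child: "t \<in> set ts \<Longrightarrow> s \<in> subtrees t \<Longrightarrow> s \<in> subtrees (Node ts)"
  by auto

lemma split3_intro: "s \<in> subtrees T \<Longrightarrow> i \<in> set (leaves s) \<Longrightarrow> j \<in> set (leaves s)
  \<Longrightarrow> k \<notin> set (leaves s) \<Longrightarrow> split3 T i j k"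
  unfolding split3_def by blast

lemma split3_sym: "split3 T i j k = split3 T j i k"
  unfolding split3_def by blast

lemma split3_lift: "t \<in> set ts \<Longrightarrow> split3 t i j k \<Longrightarrow> split3 (Node ts) i j k"
  unfolding split3_def using subtree_child by blast

lemma bin_split:
  "bin T \<Longrightarrow> i \<in> set (leaves T) \<Longrightarrow> j \<in> set (leaves T) \<Longrightarrow> k \<in> set (leaves T)
   \<Longrightarrow> i \<noteq> j \<Longrightarrow> i \<noteq> k \<Longrightarrow> j \<noteq> k
   \<Longrightarrow> split3 T i j k \<or> split3 T i k j \<or> split3 T j k i"
proof (induction T rule: bin.induct)
  case (2 l r)
  have sl: "l \<in> subtrees (Node [l, r])" and sr: "r \<in> subtrees (Node [l, r])"
    using self_subtree by auto
  have IHl: "i \<in> set (leaves l) \<Longrightarrow> j \<in> set (leaves l) \<Longrightarrow> k \<in> set (leaves l) \<Longrightarrow>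
     split3 (Node [l, r]) i j k \<or> split3 (Node [l, r]) i k j \<or> split3 (Node [l, r]) j k i"
    using 2 split3_lift[of l "[l,r]"] by auto
  have IHr: "i \<in> set (leaves r) \<Longrightarrow> j \<in> set (leaves r) \<Longrightarrow> k \<in> set (leaves r) \<Longrightarrow>
     split3 (Node [l, r]) i j k \<or> split3 (Node [l, r]) i k j \<or> split3 (Node [l, r]) j k i"
    using 2 split3_lift[of r "[l,r]"] by auto
  have in2: "i \<in> set (leaves l) \<or> i \<in> set (leaves r)" "j \<in> set (leaves l) \<or> j \<in> set (leaves r)"
    "k \<in> set (leaves l) \<or> k \<in> set (leaves r)" using "2.prems" by auto
  note A = split3_intro[OF sl, of i j k] split3_intro[OF sl, of i k j] split3_intro[OF sl, of j k i]
    split3_intro[OF sr, of i j k] split3_intro[OF sr, of i k j] split3_intro[OF sr, of j k i]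
  show ?case
    using in2 IHl IHr A
    by (cases "i \<in> set (leaves l)"; cases "j \<in> set (leaves l)"; cases "k \<in> set (leaves l)";
        cases "i \<in> set (leaves r)"; cases "j \<in> set (leaves r)"; cases "k \<in> set (leaves r)") blast+
qed auto

definition good :: "('a \<Rightarrow> 'a \<Rightarrow> real) \<Rightarrow> 'a set \<Rightarrow> 'a hctree \<Rightarrow> bool" where
  "good d V T \<longleftrightarrow> (\<forall>s\<in>subtrees T. \<forall>i\<in>set (leaves s). \<forall>j\<in>set (leaves s).
      \<forall>k\<in>V - set (leaves s). d i j \<le> d i k)"

lemma tri_ge_min:
  assumes "similarity_graph V w" "i \<in> V" "j \<in> V" "k \<in> V"
  shows "min (w i j + w i k) (min (w i j + w j k) (w i k + w j k)) \<le> triplet_cost w T i j k"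
proof -
  have "0 \<le> w i j" "0 \<le> w i k" "0 \<le> w j k"
    using assms unfolding similarity_graph_def by auto
  then show ?thesis unfolding triplet_cost_def by auto
qed

lemma TC_ge_BC:
  assumes "similarity_graph V w"
  shows "BC V w \<le> TC V w T"
  unfolding BC_def TC_def
  by (intro divide_right_mono sum_mono) (use tri_ge_min[OF assms] in auto)

lemma BC_nonneg:
  assumes "similarity_graph V w"
  shows "0 \<le> BC V w"
  unfolding BC_def using assms unfolding similarity_graph_def
  by (intro divide_nonneg_pos sum_nonneg) auto

lemma rho_ge1:
  assumes "similarity_graph V w"
  shows "1 \<le> rho V w T"
proof -
  have a: "BC V w \<le> TC V w T" "0 \<le> BC V w" using TC_ge_BC BC_nonneg assms by auto
  show ?thesis
  proof (cases "BC V w = 0")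
    case True then show ?thesis unfolding rho_def by auto
  next
    case False
    then have "BC V w > 0" using a by auto
    then have "1 \<le> TC V w T / BC V w" using a by auto
    then show ?thesis using False unfolding rho_def by auto
  qed
qed

lemma perfect_of_tree:
  assumes "similarity_graph V w" "hc_tree V T" "TC V w T = BC V w"
  shows "perfect_HC_structure V w"
proof -
  have r1: "rho V w T = 1" unfolding rho_def using assms(3) by auto
  have "rho_star V w \<le> 1" unfolding rho_star_def using assms(2) r1
    by (metis INF_lower mem_Collect_eq)
  moreover have "1 \<le> rho_star V w" unfolding rho_star_def
    using rho_ge1[OF assms(1)] by (intro INF_greatest) auto
  ultimately show ?thesis unfolding perfect_HC_structure_def by auto
qed

lemma TC_eq_BC:
  assumes sim: "similarity_graph V w" and hT: "hc_tree V T" and b: "bin T"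
    and key: "\<And>a b c. a \<in> V \<Longrightarrow> b \<in> V \<Longrightarrow> c \<in> V \<Longrightarrow> a \<noteq> b \<Longrightarrow> a \<noteq> c \<Longrightarrow> b \<noteq> c
       \<Longrightarrow> split3 T a b c \<Longrightarrow> w a c \<le> w a b \<and> w b c \<le> w a b"
  shows "TC V w T = BC V w"
proof -
  have eq: "triplet_cost w T i j k = min (w i j + w i k) (min (w i j + w j k) (w i k + w j k))"
    if "i \<in> V" "j \<in> V" "k \<in> V" "i \<noteq> j" "i \<noteq> k" "j \<noteq> k" for i j k
  proof -
    have sym: "w k j = w j k" "w j i = w i j" "w k i = w i k"
      using sim that unfolding similarity_graph_def by auto
    have bs: "split3 T i j k \<or> split3 T i k j \<or> split3 T j k i"
      using bin_split[OF b] hT that unfolding hc_tree_def by auto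
    show ?thesis
      unfolding triplet_cost_def
      using key[of i j k] key[of i k j] key[of j k i] that sym bs by auto
  qed
  show ?thesis unfolding TC_def BC_def
    by (intro arg_cong[where f="\<lambda>x. x / 6"] sum.cong refl) (auto simp: eq)
qed

lemma exists_tree:
  assumes um: "ultrametric_on V0 d"
  shows "finite V \<Longrightarrow> V \<noteq> {} \<Longrightarrow> V \<subseteq> V0 \<Longrightarrow>
    \<exists>T. bin T \<and> distinct (leaves T) \<and> set (leaves T) = V \<and> good d V T"
proof (induction "card V" arbitrary: V rule: less_induct)
  case less
  show ?case
  proof (cases "card V = 1")
    case True
    then obtain x where V: "V = {x}" by (meson card_1_singletonE)
    show ?thesis
      by (rule exI[of _ "Leaf x"]) (auto simp: V good_def)
  next
    case False
    then have "card V \<ge> 2" using less.prems card_gt_0_iff[of V] by linarith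
    obtain x where x: "x \<in> V" using less.prems by auto
    have "\<not> V \<subseteq> {x}"
    proof
      assume "V \<subseteq> {x}"
      then have "card V \<le> card {x}" by (intro card_mono) auto
      then show False using \<open>card V \<ge> 2\<close> by simp
    qed
    then obtain y where y: "y \<in> V" "y \<noteq> x" by blast
    define r where "r = Max (d x ` V)"
    have dle: "d x z \<le> r" if "z \<in> V" for z unfolding r_def using that less.prems by auto
    have "r \<in> d x ` V" unfolding r_def using less.prems by auto
    then obtain z where z: "z \<in> V" "d x z = r" by auto
    have dpos: "d x y > 0" using um y x less.prems unfolding ultrametric_on_def
      by (metis in_mono order_le_less)
    have dx0: "d x x = 0" using um x less.prems unfolding ultrametric_on_def by auto
    have rpos: "r > 0" using dle[OF y(1)] dpos by auto
    define A where "A = {u\<in>V. d x u < r}"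
    define B where "B = {u\<in>V. d x u = r}"
    have AB: "A \<union> B = V" "A \<inter> B = {}" unfolding A_def B_def using dle
      by (auto simp: order_le_less)
    have xA: "x \<in> A" unfolding A_def using x dx0 rpos by auto
    have zB: "z \<in> B" unfolding B_def using z by auto
    have fin: "finite A" "finite B" using less.prems AB by auto
    have "A \<subset> V" using AB zB by blast
    then have cA: "card A < card V" using less.prems by (intro psubset_card_mono) auto
    have "B \<subset> V" using AB xA by blast
    then have cB: "card B < card V" using less.prems by (intro psubset_card_mono) auto
    have ne: "A \<noteq> {}" "B \<noteq> {}" using xA zB by auto
    have sub: "A \<subseteq> V0" "B \<subseteq> V0" using AB less.prems by auto
    obtain TA where TA: "bin TA" "distinct (leaves TA)" "set (leaves TA) = A" "good d A TA"
      using less.hyps[OF cA fin(1) ne(1) sub(1)] by blast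
    obtain TB where TB: "bin TB" "distinct (leaves TB)" "set (leaves TB) = B" "good d B TB"
      using less.hyps[OF cB fin(2) ne(2) sub(2)] by blast
    have V0: "V \<subseteq> V0" using less.prems by auto
    have um3: "\<forall>x\<in>V0. \<forall>y\<in>V0. \<forall>z\<in>V0. d x y \<le> max (d x z) (d y z)"
      using um unfolding ultrametric_on_def by (rule conjunct2[THEN conjunct2])
    have um1: "\<forall>x\<in>V0. \<forall>y\<in>V0. 0 \<le> d x y \<and> (d x y = 0 \<longleftrightarrow> x = y) \<and> d x y = d y x"
      using um unfolding ultrametric_on_def by (rule conjunct1)
    have ult: "\<And>a b c. a \<in> V \<Longrightarrow> b \<in> V \<Longrightarrow> c \<in> V \<Longrightarrow> d a b \<le> max (d a c) (d b c)"
      using um3 V0 by (meson subsetD)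
    have dsym: "\<And>a b. a \<in> V \<Longrightarrow> b \<in> V \<Longrightarrow> d a b = d b a"
      using um1 V0 by (meson subsetD)
    have crossA: "d i j \<le> d i k" if "i \<in> A" "j \<in> A" "k \<in> B" for i j k
    proof -
      have V: "i \<in> V" "j \<in> V" "k \<in> V" using that AB by auto
      have "d i j \<le> max (d i x) (d j x)" using ult V x by auto
      also have "\<dots> < r" using that dsym V x unfolding A_def by auto
      also have "r \<le> d i k"
        using ult[of x k i] V x that dsym[of i x] dsym[of k i] unfolding A_def B_def by auto
      finally show ?thesis by simp
    qed
    have crossB: "d i j \<le> d i k" if "i \<in> B" "j \<in> B" "k \<in> A" for i j k
    proof -
      have V: "i \<in> V" "j \<in> V" "k \<in> V" using that AB by auto
      have "d i j \<le> max (d i x) (d j x)" using ult V x by auto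
      also have "\<dots> \<le> r" using that dsym V x dle unfolding A_def by auto
      also have "r \<le> d i k"
        using ult[of x i k] V x that dsym[of i x] dsym[of k i] unfolding A_def B_def by auto
      finally show ?thesis by simp
    qed
    let ?T = "Node [TA, TB]"
    have "good d V ?T"
      unfolding good_def
    proof (intro ballI)
      fix s i j k
      assume s: "s \<in> subtrees ?T" and i: "i \<in> set (leaves s)" and j: "j \<in> set (leaves s)"
        and k: "k \<in> V - set (leaves s)"
      have "s = ?T \<or> s \<in> subtrees TA \<or> s \<in> subtrees TB" using s by auto
      then show "d i j \<le> d i k"
      proof (elim disjE)
        assume "s = ?T" then show ?thesis using k AB TA TB by auto
      next
        assume sA: "s \<in> subtrees TA"
        have "set (leaves s) \<subseteq> A" using leaves_subtree[OF sA] TA by auto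
        then show ?thesis
          using TA(4) sA i j k crossA AB unfolding good_def by blast
      next
        assume sB: "s \<in> subtrees TB"
        have "set (leaves s) \<subseteq> B" using leaves_subtree[OF sB] TB by auto
        then show ?thesis
          using TB(4) sB i j k crossB AB unfolding good_def by blast
      qed
    qed
    moreover have "distinct (leaves ?T)" using TA TB AB by auto
    moreover have "set (leaves ?T) = V" using TA TB AB by auto
    ultimately show ?thesis using TA TB by (intro exI[of _ ?T]) auto
  qed
qed

lemma part1:
  assumes sim: "similarity_graph V w" and gt: "ground_truth V w"
  shows "perfect_HC_structure V w"
proof -
  obtain d f where um: "ultrametric_on V d" and fpos: "\<forall>t\<ge>0. f t \<ge> (0::real)"
    and fmono: "\<forall>s t. 0 \<le> s \<longrightarrow> s \<le> t \<longrightarrow> f t \<le> f s"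
    and wf: "\<forall>x\<in>V. \<forall>y\<in>V. x \<noteq> y \<longrightarrow> w x y = f (d x y)"
    using gt unfolding ground_truth_def by blast
  obtain T where T: "bin T" "distinct (leaves T)" "set (leaves T) = V" "good d V T"
    using exists_tree[OF um] sim unfolding similarity_graph_def by blast
  have hT: "hc_tree V T" using T bin_wf unfolding hc_tree_def by auto
  have "TC V w T = BC V w"
  proof (rule TC_eq_BC[OF sim hT T(1)])
    fix a b c assume abc: "a \<in> V" "b \<in> V" "c \<in> V" "a \<noteq> b" "a \<noteq> c" "b \<noteq> c"
      and sp: "split3 T a b c"
    obtain s where s: "s \<in> subtrees T" "a \<in> set (leaves s)" "b \<in> set (leaves s)"
      "c \<notin> set (leaves s)" using sp unfolding split3_def by blast
    have d1: "d a b \<le> d a c" using T(4) s abc unfolding good_def by blast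
    have d2: "d b a \<le> d b c" using T(4) s abc unfolding good_def by blast
    have dsym: "d b a = d a b" and dnn: "0 \<le> d a b"
      using um abc unfolding ultrametric_on_def by auto
    show "w a c \<le> w a b \<and> w b c \<le> w a b"
      using fmono d1 d2 dsym dnn wf abc by auto
  qed
  then show ?thesis using perfect_of_tree[OF sim hT] by auto
qed

definition wex :: "nat \<Rightarrow> nat \<Rightarrow> real" where
  "wex i j = (if {i,j} = {0,1} then 3 else if {i,j} = {0,2} then 2
     else if {i,j} = {1,2} then 1 else 0)"

lemma wex_vals: "wex 0 1 = 3" "wex 1 0 = 3" "wex 0 2 = 2" "wex 2 0 = 2"
  "wex 1 2 = 1" "wex 2 1 = 1"
  unfolding wex_def by (auto simp: doubleton_eq_iff)

lemma part2_sim: "similarity_graph {0,1,2} wex"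
  unfolding similarity_graph_def wex_def by (auto simp: insert_commute)

lemma part2_perfect: "perfect_HC_structure {0,1,2} wex"
proof -
  let ?T = "Node [Node [Leaf (0::nat), Leaf 1], Leaf 2]"
  have hT: "hc_tree {0,1,2} ?T" unfolding hc_tree_def by auto
  have b: "bin ?T" by simp
  have "TC {0,1,2} wex ?T = BC {0,1,2} wex"
  proof (rule TC_eq_BC[OF part2_sim hT b])
    fix a b c :: nat assume abc: "a \<in> {0,1,2}" "b \<in> {0,1,2}" "c \<in> {0,1,2}" "a \<noteq> b" "a \<noteq> c" "b \<noteq> c"
      and sp: "split3 ?T a b c"
    obtain s where s: "s \<in> subtrees ?T" "a \<in> set (leaves s)" "b \<in> set (leaves s)"
      "c \<notin> set (leaves s)" using sp unfolding split3_def by blast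
    have st: "subtrees ?T = {?T, Node [Leaf 0, Leaf 1], Leaf 0, Leaf 1, Leaf 2}" by auto
    have "s = Node [Leaf 0, Leaf 1]"
      using s abc unfolding st by auto
    then have "(a = 0 \<and> b = 1 \<or> a = 1 \<and> b = 0) \<and> c = 2" using s abc by auto
    then show "wex a c \<le> wex a b \<and> wex b c \<le> wex a b"
      using wex_vals by auto
  qed
  then show ?thesis using perfect_of_tree[OF part2_sim hT] by auto
qed

lemma part2_not_gt: "\<not> ground_truth {0,1,2} wex"
proof
  assume "ground_truth {0,1,2} wex"
  then obtain d f where um: "ultrametric_on {0,1,2} d"
    and fmono: "\<forall>s t. 0 \<le> s \<longrightarrow> s \<le> t \<longrightarrow> f t \<le> f s"
    and wf: "\<forall>x\<in>{0,1,2}. \<forall>y\<in>{0,1,2}. x \<noteq> y \<longrightarrow> wex x y = f (d x y)"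
    unfolding ground_truth_def by blast
  have f1: "f (d 0 1) = 3" using wf[rule_format, of 0 1] wex_vals by simp
  have f2: "f (d 0 2) = 2" using wf[rule_format, of 0 2] wex_vals by simp
  have f3: "f (d 1 2) = 1" using wf[rule_format, of 1 2] wex_vals by simp
  note f = f1 f2 f3
  have nn: "0 \<le> d 0 1" "0 \<le> d 0 2" "0 \<le> d 1 2" and sy: "d 1 0 = d 0 1" "d 2 0 = d 0 2"
    and ul: "d 1 2 \<le> max (d 1 0) (d 2 0)"
  proof -
    have um3: "\<forall>x\<in>{0,1,2::nat}. \<forall>y\<in>{0,1,2}. \<forall>z\<in>{0,1,2}. d x y \<le> max (d x z) (d y z)"
      using um unfolding ultrametric_on_def by (rule conjunct2[THEN conjunct2])
    have um1: "\<forall>x\<in>{0,1,2::nat}. \<forall>y\<in>{0,1,2}. 0 \<le> d x y \<and> (d x y = 0 \<longleftrightarrow> x = y) \<and> d x y = d y x"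
      using um unfolding ultrametric_on_def by (rule conjunct1)
    have m: "(0::nat) \<in> {0,1,2}" "(1::nat) \<in> {0,1,2}" "(2::nat) \<in> {0,1,2}" by simp_all
    show "0 \<le> d 0 1" "0 \<le> d 0 2" "0 \<le> d 1 2" "d 1 0 = d 0 1" "d 2 0 = d 0 2"
      using um1 m by meson+
    show "d 1 2 \<le> max (d 1 0) (d 2 0)" using um3 m by meson
  qed
  have "d 0 1 < d 1 2"
  proof (rule ccontr)
    assume "\<not> ?thesis" then have "f (d 0 1) \<le> f (d 1 2)" using fmono[rule_format, of "d 1 2" "d 0 1"] nn by linarith
    then show False using f by auto
  qed
  moreover have "d 0 2 < d 1 2"
  proof (rule ccontr)
    assume "\<not> ?thesis" then have "f (d 0 2) \<le> f (d 1 2)" using fmono[rule_format, of "d 1 2" "d 0 2"] nn by linarith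
    then show False using f by auto
  qed
  ultimately show False using ul sy by (simp add: max_def split: if_splits)
qed

theorem theorem4:
  fixes V :: "'a set" and w :: "'a \<Rightarrow> 'a \<Rightarrow> real"
  shows "(similarity_graph V w \<and> ground_truth V w \<longrightarrow> perfect_HC_structure V w) \<and>
         (\<exists>(V' :: nat set) w'. similarity_graph V' w' \<and> perfect_HC_structure V' w' \<and>
              \<not> ground_truth V' w')"
  using part1 part2_sim part2_perfect part2_not_gt by blast

end
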